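(* Let $T>0$, $A\in\mathbb R$, let the Hamiltonians satisfy (H), let $u_0$ be Lipschitz continuous, and assume the CFL condition (CFLr) holds. Let $u^\varepsilon$ be the solution of the scheme (S) with $F=F_A$ and let $u$ be a viscosity super-solution of (P$_{F_A}$)-(IC) satisfying, for some $C_T>0$, $u(t,x)\ge-C_T(1+d(0,x))$ for all $t\in(0,T)$, $x\in J$. Then there exists $C=C(T)>0$ such that for all $(t,x)\in\mathcal G_\varepsilon$ with $t\le T$ and all $(s,y)\in[0,T)\times J$, $$u^\varepsilon(t,x)\le u(s,y)+C(1+d(x,y)).$$
   Context: Junction: $J=\bigcup_{\alpha=1}^NJ_\alpha$, $N$ copies of $[0,\infty)$ glued at $0$; $d(x,y)=|x-y|$ on the same branch, $|x|+|y|$ otherwise; $\partial_\alpha u$ is the derivative along $J_\alpha$, $u_x=\partial_\alpha u$ off $0$ and $u_x=(\partial_1u,\dots,\partial_Nu)$ at $0$. Hamiltonians (H): $H_\alpha$ Lipschitz, coercive, quasi-convex; $p_0^\alpha$ a minimum point; $H_\alpha^\mp(p)=H_\alpha(\min/\max(p,p_0^\alpha))$; $F_A(p)=\max(A,\max_\alpha H_\alpha^-(p_\alpha))$. (P$_{F}$)-(IC): $u_t+H_\alpha(u_x)=0$ in $(0,T)\times(J_\alpha\setminus\{0\})$, $u_t+F(u_x)=0$ on $(0,T)\times\{0\}$, $u(0,\cdot)=u_0$. Viscosity super-solution: for every $\varphi$ continuous on $(0,T)\times J$ and $C^1$ on each $(0,T)\times J_\alpha$ with $u_*\ge\varphi$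 near $(t_0,x_0)$, $t_0>0$, equality at $(t_0,x_0)$, one has $\varphi_t+H_\alpha(\varphi_x)\ge0$ if $x_0\in J_\alpha\setminus\{0\}$ and $\varphi_t+F(\varphi_x)\ge0$ if $x_0=0$; and $u_*(0,\cdot)\ge u_0$. Scheme (S) with $F=F_A$: $\mathcal G_\varepsilon=\{n\Delta t\}\times\{x_i^\alpha\}$, $u^\varepsilon(n\Delta t,x_i^\alpha)=U_i^{\alpha,n}$, $U_0^{\alpha,n}=U_0^n$; $\frac{U_i^{\alpha,n+1}-U_i^{\alpha,n}}{\Delta t}+\max\{H_\alpha^+(p_{i,-}^{\alpha,n}),H_\alpha^-(p_{i,+}^{\alpha,n})\}=0$ ($i\ge1$), $\frac{U_0^{n+1}-U_0^n}{\Delta t}+F_A(p_{0,+}^{1,n},\dots,p_{0,+}^{N,n})=0$, $U_i^{\alpha,0}=u_0(x_i^\alpha)$, with $p_{i,\pm}^{\alpha,n}$ forward/backward differences. (CFLr) is the CFL condition $\frac{\Delta x}{\Delta t}\ge\max\{\max_\alpha\sup_{[\underline p_\alpha,\overline p_\alpha]}|H_\alpha'|,\sup_{\prod_\alpha[\underline p^0_\alpha,\overline p_\alpha]}(-\sum_\beta\partial_{p_\beta}F_A)\}$ with bounds $\underline p_\alpha,\overline p_\alpha,\underline p^0_\alpha$ depending only on $u_0$, the $H_\alpha$ and $F_A$, which makes the scheme monotone. *)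

theory Defs
  imports "HOL-Analysis.Analysis"
begin

text \<open>Branches are indexed by a finite type 'n (so N = CARD('n) >= 1).
  A point of the junction is either the junction point Jo, or a point Br a x
  at distance x > 0 from Jo on the branch J_a.\<close>

datatype 'n jpt = Jo | Br 'n real

definition J :: "'n jpt set" where
  "J = {Jo} \<union> {Br a x | a x. 0 < x}"

definition pt :: "'n \<Rightarrow> real \<Rightarrow> 'n jpt" where
  "pt a x = (if x = 0 then Jo else Br a x)"

fun jabs :: "'n jpt \<Rightarrow> real" where
  "jabs Jo = 0"
| "jabs (Br a x) = x"

fun jbranch :: "'n jpt \<Rightarrow> 'n option" where
  "jbranch Jo = None"
| "jbranch (Br a x) = Some a"

definition jdist :: "'n jpt \<Rightarrow> 'n jpt \<Rightarrow> real" where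
  "jdist x y = (if jbranch x = jbranch y \<or> x = Jo \<or> y = Jo
                then \<bar>jabs x - jabs y\<bar> else jabs x + jabs y)"

definition Hminus :: "('n \<Rightarrow> real \<Rightarrow> real) \<Rightarrow> ('n \<Rightarrow> real) \<Rightarrow> 'n \<Rightarrow> real \<Rightarrow> real" where
  "Hminus H p0 a p = H a (min p (p0 a))"

definition Hplus :: "('n \<Rightarrow> real \<Rightarrow> real) \<Rightarrow> ('n \<Rightarrow> real) \<Rightarrow> 'n \<Rightarrow> real \<Rightarrow> real" where
  "Hplus H p0 a p = H a (max p (p0 a))"

definition FA :: "('n::finite \<Rightarrow> real \<Rightarrow> real) \<Rightarrow> ('n \<Rightarrow> real) \<Rightarrow> real \<Rightarrow> real ^ 'n \<Rightarrow> real" where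
  "FA H p0 A p = max A (Max (range (\<lambda>a. Hminus H p0 a (p $ a))))"

definition hyp_H :: "('n \<Rightarrow> real \<Rightarrow> real) \<Rightarrow> ('n \<Rightarrow> real) \<Rightarrow> bool" where
  "hyp_H H p0 \<longleftrightarrow> (\<forall>a.
      (\<exists>L. \<forall>p q. \<bar>H a p - H a q\<bar> \<le> L * \<bar>p - q\<bar>)
    \<and> filterlim (H a) at_top at_infinity
    \<and> (\<forall>c. convex {p. H a p \<le> c})
    \<and> (\<forall>p. H a (p0 a) \<le> H a p))"

definition jlipschitz :: "('n jpt \<Rightarrow> real) \<Rightarrow> bool" where
  "jlipschitz u0 \<longleftrightarrow> (\<exists>L. \<forall>x\<in>J. \<forall>y\<in>J. \<bar>u0 x - u0 y\<bar> \<le> L * jdist x y)"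

definition jlip_const :: "('n jpt \<Rightarrow> real) \<Rightarrow> real" where
  "jlip_const u0 = Inf {L. 0 \<le> L \<and> (\<forall>x\<in>J. \<forall>y\<in>J. \<bar>u0 x - u0 y\<bar> \<le> L * jdist x y)}"

definition lsc_env :: "real \<Rightarrow> (real \<Rightarrow> 'n jpt \<Rightarrow> real) \<Rightarrow> real \<Rightarrow> 'n jpt \<Rightarrow> ereal" where
  "lsc_env T u t x = (SUP r\<in>{0<..}. INF sy\<in>{(s, y). 0 \<le> s \<and> s < T \<and> y \<in> J \<and>
       \<bar>s - t\<bar> < r \<and> jdist x y < r}. ereal (u (fst sy) (snd sy)))"

definition jcont :: "real \<Rightarrow> (real \<Rightarrow> 'n jpt \<Rightarrow> real) \<Rightarrow> bool" where
  "jcont T phi \<longleftrightarrow> (\<forall>t x e. 0 < t \<and> t < T \<and> x \<in> J \<and> 0 < e \<longrightarrow>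
     (\<exists>\<delta>>0. \<forall>s y. 0 < s \<and> s < T \<and> y \<in> J \<and> \<bar>s - t\<bar> < \<delta> \<and> jdist x y < \<delta> \<longrightarrow>
        \<bar>phi s y - phi t x\<bar> < e))"

definition c1_branch :: "real \<Rightarrow> (real \<Rightarrow> 'n jpt \<Rightarrow> real) \<Rightarrow> 'n \<Rightarrow>
    (real \<Rightarrow> real \<Rightarrow> real) \<Rightarrow> (real \<Rightarrow> real \<Rightarrow> real) \<Rightarrow> bool" where
  "c1_branch T phi a phit phix \<longleftrightarrow>
     continuous_on ({0<..<T} \<times> {0..}) (\<lambda>(t, x). phit t x)
   \<and> continuous_on ({0<..<T} \<times> {0..}) (\<lambda>(t, x). phix t x)
   \<and> (\<forall>t x. 0 < t \<and> t < T \<and> 0 \<le> x \<longrightarrow>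
        ((\<lambda>(s, y). phi s (pt a y)) has_derivative (\<lambda>(h, k). h * phit t x + k * phix t x))
          (at (t, x) within {0<..<T} \<times> {0..}))"

definition visc_super :: "real \<Rightarrow> ('n::finite \<Rightarrow> real \<Rightarrow> real) \<Rightarrow> (real ^ 'n \<Rightarrow> real) \<Rightarrow>
    ('n jpt \<Rightarrow> real) \<Rightarrow> (real \<Rightarrow> 'n jpt \<Rightarrow> real) \<Rightarrow> bool" where
  "visc_super T H F u0 u \<longleftrightarrow>
     (\<forall>phi phit phix t0 x0.
        0 < t0 \<and> t0 < T \<and> x0 \<in> J \<and> jcont T phi
        \<and> (\<forall>a. c1_branch T phi a (phit a) (phix a))
        \<and> (\<exists>r>0. \<forall>s y. 0 < s \<and> s < T \<and> y \<in> J \<and> \<bar>s - t0\<bar> < r \<and> jdist y x0 < r \<longrightarrow>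
               ereal (phi s y) \<le> lsc_env T u s y)
        \<and> lsc_env T u t0 x0 = ereal (phi t0 x0)
        \<longrightarrow> (case x0 of
               Jo \<Rightarrow> (\<forall>a. phit a t0 0 + F (\<chi> b. phix b t0 0) \<ge> 0)
             | Br a x \<Rightarrow> phit a t0 x + H a (phix a t0 x) \<ge> 0))
   \<and> (\<forall>x\<in>J. ereal (u0 x) \<le> lsc_env T u 0 x)"

definition scheme :: "('n::finite \<Rightarrow> real \<Rightarrow> real) \<Rightarrow> ('n \<Rightarrow> real) \<Rightarrow> real \<Rightarrow>
    ('n jpt \<Rightarrow> real) \<Rightarrow> real \<Rightarrow> real \<Rightarrow> (nat \<Rightarrow> 'n \<Rightarrow> nat \<Rightarrow> real) \<Rightarrow> bool" where
  "scheme H p0 A u0 dt dx U \<longleftrightarrow>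
     (\<forall>n a b. U n a 0 = U n b 0)
   \<and> (\<forall>n a i. 1 \<le> i \<longrightarrow>
        (U (Suc n) a i - U n a i) / dt
        + max (Hplus H p0 a ((U n a i - U n a (i - 1)) / dx))
              (Hminus H p0 a ((U n a (i + 1) - U n a i) / dx)) = 0)
   \<and> (\<forall>n a. (U (Suc n) a 0 - U n a 0) / dt
        + FA H p0 A (\<chi> b. (U n b 1 - U n b 0) / dx) = 0)
   \<and> (\<forall>a i. U 0 a i = u0 (pt a (real i * dx)))"

text \<open>Bound on the discrete time derivative, and the gradient bounds derived from it.\<close>
definition C0 :: "('n::finite \<Rightarrow> real \<Rightarrow> real) \<Rightarrow> real \<Rightarrow> ('n jpt \<Rightarrow> real) \<Rightarrow> real" where
  "C0 H A u0 = max \<bar>A\<bar> (Max (range (\<lambda>a. Sup ((\<lambda>p. \<bar>H a p\<bar>) ` {- jlip_const u0 .. jlip_const u0}))))"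

definition p_up :: "('n::finite \<Rightarrow> real \<Rightarrow> real) \<Rightarrow> real \<Rightarrow> ('n jpt \<Rightarrow> real) \<Rightarrow> 'n \<Rightarrow> real" where
  "p_up H A u0 a = Sup {p. H a p \<le> C0 H A u0}"

definition p_lo :: "('n::finite \<Rightarrow> real \<Rightarrow> real) \<Rightarrow> real \<Rightarrow> ('n jpt \<Rightarrow> real) \<Rightarrow> 'n \<Rightarrow> real" where
  "p_lo H A u0 a = Inf {p. H a p \<le> C0 H A u0}"

definition p_lo0 :: "('n::finite \<Rightarrow> real \<Rightarrow> real) \<Rightarrow> real \<Rightarrow> ('n jpt \<Rightarrow> real) \<Rightarrow> 'n \<Rightarrow> real" where
  "p_lo0 H A u0 a = p_lo H A u0 a"

definition CFLr :: "('n::finite \<Rightarrow> real \<Rightarrow> real) \<Rightarrow> ('n \<Rightarrow> real) \<Rightarrow> real \<Rightarrow>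
    ('n jpt \<Rightarrow> real) \<Rightarrow> real \<Rightarrow> real \<Rightarrow> bool" where
  "CFLr H p0 A u0 dt dx \<longleftrightarrow>
     (\<forall>a p D. p_lo H A u0 a \<le> p \<and> p \<le> p_up H A u0 a \<and> (H a has_real_derivative D) (at p)
        \<longrightarrow> \<bar>D\<bar> \<le> dx / dt)
   \<and> (\<forall>p D. (\<forall>a. p_lo0 H A u0 a \<le> p $ a \<and> p $ a \<le> p_up H A u0 a)
        \<and> (FA H p0 A has_derivative D) (at p)
        \<longrightarrow> - D (\<chi> b. 1) \<le> dx / dt)"

end

theory Submission
  imports Defs
begin


lemma jabs_nonneg: "x \<in> J \<Longrightarrow> 0 \<le> jabs x"
  by (auto simp: J_def)

lemma jdist_sym: "jdist x y = jdist y x"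
  unfolding jdist_def by auto

lemma jdist_self: "jdist x x = 0"
  unfolding jdist_def by auto

lemma jdist_nonneg: "x \<in> J \<Longrightarrow> y \<in> J \<Longrightarrow> 0 \<le> jdist x y"
  unfolding jdist_def by (auto simp: J_def)

lemma jdist_abs: "x \<in> J \<Longrightarrow> y \<in> J \<Longrightarrow> \<bar>jabs x - jabs y\<bar> \<le> jdist x y"
  unfolding jdist_def by (auto simp: J_def)

lemma jdist_tri: "x \<in> J \<Longrightarrow> y \<in> J \<Longrightarrow> z \<in> J \<Longrightarrow> jdist x z \<le> jdist x y + jdist y z"
  unfolding jdist_def J_def
  by (cases x; cases y; cases z) (auto split: if_splits)

lemma pt_in_J: "0 \<le> x \<Longrightarrow> pt a x \<in> J"
  by (auto simp: pt_def J_def)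

lemma jdist_pt: "0 \<le> x \<Longrightarrow> 0 \<le> z \<Longrightarrow> jdist (pt a x) (pt a z) = \<bar>x - z\<bar>"
  unfolding jdist_def pt_def by auto

lemma J_pt: "y \<in> J \<Longrightarrow> \<exists>b. y = pt b (jabs y)"
  by (auto simp: J_def pt_def)

lemma jabs_pt: "0 \<le> x \<Longrightarrow> jabs (pt a x) = x" by (auto simp: pt_def)



definition Sb :: "real \<Rightarrow> real \<Rightarrow> 'n jpt \<Rightarrow> real \<Rightarrow> (real \<times> 'n jpt) set" where
  "Sb T t x r = {(s, y). 0 \<le> s \<and> s < T \<and> y \<in> J \<and> \<bar>s - t\<bar> < r \<and> jdist x y < r}"

lemma lsc_env_alt: "lsc_env T u t x = (SUP r\<in>{0<..}. INF sy\<in>Sb T t x r. ereal (u (fst sy) (snd sy)))"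
  unfolding lsc_env_def Sb_def by simp

lemma lsc_env_le: "0 \<le> t \<Longrightarrow> t < T \<Longrightarrow> x \<in> J \<Longrightarrow> lsc_env T u t x \<le> ereal (u t x)"
  unfolding lsc_env_alt
proof (rule SUP_least)
  fix r :: real assume "r \<in> {0<..}" "0 \<le> t" "t < T" "x \<in> J"
  then have "(t, x) \<in> Sb T t x r" by (auto simp: Sb_def jdist_self)
  then show "(INF sy\<in>Sb T t x r. ereal (u (fst sy) (snd sy))) \<le> ereal (u t x)"
    by (metis (no_types, lifting) INF_lower fst_conv snd_conv)
qed

lemma lsc_env_ge: assumes "0 < r" "\<And>s y. (s, y) \<in> Sb T t x r \<Longrightarrow> c \<le> u s y"
  shows "ereal c \<le> lsc_env T u t x"
  unfolding lsc_env_alt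
proof (rule SUP_upper2[of r])
  show "r \<in> {0<..}" using assms by simp
  show "ereal c \<le> (INF sy\<in>Sb T t x r. ereal (u (fst sy) (snd sy)))"
    by (rule INF_greatest) (use assms in auto)
qed

lemma lsc_env_open:
  assumes "ereal c < lsc_env T u t x" "x \<in> J"
  shows "\<exists>r>0. \<forall>s y. (s, y) \<in> Sb T t x r \<longrightarrow> ereal c < lsc_env T u s y"
proof -
  from assms(1) obtain r where r: "r > 0" "ereal c < (INF sy\<in>Sb T t x r. ereal (u (fst sy) (snd sy)))"
    unfolding lsc_env_alt less_SUP_iff by auto
  have "ereal c < lsc_env T u s y" if sy: "(s, y) \<in> Sb T t x (r/2)" for s y
  proof -
    have sub: "Sb T s y (r/2) \<subseteq> Sb T t x r"
    proof
      fix p assume p: "p \<in> Sb T s y (r/2)"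
      obtain s' y' where pe: "p = (s', y')" by fastforce
      have "jdist x y' \<le> jdist x y + jdist y y'"
        using p sy assms(2) by (intro jdist_tri) (auto simp: Sb_def pe)
      moreover have "\<bar>s' - t\<bar> < r" using p sy unfolding Sb_def pe by clarsimp (smt (verit))
      ultimately show "p \<in> Sb T t x r" using p sy by (auto simp: Sb_def pe)
    qed
    have "(INF sy\<in>Sb T t x r. ereal (u (fst sy) (snd sy))) \<le> (INF sy\<in>Sb T s y (r/2). ereal (u (fst sy) (snd sy)))"
      by (rule INF_superset_mono[OF sub]) simp
    also have "\<dots> \<le> lsc_env T u s y"
      unfolding lsc_env_alt by (rule SUP_upper) (use r in auto)
    finally show ?thesis using r by simp
  qed
  then show ?thesis using r by (intro exI[of _ "r/2"]) auto
qed



lemma lsc_attains_min: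
  fixes f :: "'a::metric_space \<Rightarrow> real"
  assumes K: "compact K" "K \<noteq> {}"
    and lsc: "\<And>p c. p \<in> K \<Longrightarrow> c < f p \<Longrightarrow> \<exists>r>0. \<forall>q\<in>K. dist q p < r \<longrightarrow> c < f q"
  shows "\<exists>p\<in>K. \<forall>q\<in>K. f p \<le> f q"
proof (rule ccontr)
  assume "\<not> ?thesis"
  then have "\<forall>p\<in>K. \<exists>q\<in>K. f q < f p" by (meson not_le)
  then obtain g where g: "\<And>p. p \<in> K \<Longrightarrow> g p \<in> K \<and> f (g p) < f p" by metis
  have "\<forall>p\<in>K. \<exists>r>0. \<forall>q\<in>K. dist q p < r \<longrightarrow> f (g p) < f q"
    using lsc g by blast
  then obtain rr where rr: "\<And>p. p \<in> K \<Longrightarrow> rr p > 0 \<and> (\<forall>q\<in>K. dist q p < rr p \<longrightarrow> f (g p) < f q)"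
    by metis
  have "K \<subseteq> (\<Union>p\<in>K. ball p (rr p))"
    using rr by (auto intro!: bexI)
  then obtain F where F: "F \<subseteq> K" "finite F" "K \<subseteq> (\<Union>p\<in>F. ball p (rr p))"
    using compactE_image[OF K(1), of K "\<lambda>p. ball p (rr p)"] by auto
  then have "F \<noteq> {}" using K(2) by auto
  have "Min ((\<lambda>p. f (g p)) ` F) \<in> (\<lambda>p. f (g p)) ` F"
    using F(2) \<open>F \<noteq> {}\<close> by (intro Min_in) auto
  then obtain p0 where p0F: "p0 \<in> F" and p0v: "f (g p0) = Min ((\<lambda>p. f (g p)) ` F)" by auto
  have p0: "p0 \<in> F" "\<forall>p\<in>F. f (g p0) \<le> f (g p)"
    using p0F p0v F(2) by auto
  have "g p0 \<in> K" using g p0 F by auto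
  then obtain p1 where p1: "p1 \<in> F" "g p0 \<in> ball p1 (rr p1)" using F by auto
  then have "f (g p1) < f (g p0)" using rr[of p1] F \<open>g p0 \<in> K\<close> by (auto simp: dist_commute)
  then show False using p0 p1 by fastforce
qed



lemma sqrt_lip: "\<bar>sqrt (1 + a\<^sup>2) - sqrt (1 + b\<^sup>2)\<bar> \<le> \<bar>a - b\<bar>"
proof -
  have "\<bar>norm (1::real, a) - norm (1::real, b)\<bar> \<le> norm ((1::real, a) - (1, b))"
    by (rule norm_triangle_ineq3)
  then show ?thesis by (simp add: norm_Pair)
qed

lemma sqrt_ge: "\<bar>a\<bar> \<le> sqrt (1 + a\<^sup>2)"
  by (rule real_le_rsqrt) simp

lemma deriv_branch:
  fixes t x C M K \<eta> T c :: real
  assumes "t < T"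
  shows "((\<lambda>(s, y). C - M * sqrt (1 + (y - c)\<^sup>2) - K * s - \<eta> / (T - s)) has_derivative
          (\<lambda>(h, k). h * (- K - \<eta> / (T - t)\<^sup>2) + k * (- M * (x - c) / sqrt (1 + (x - c)\<^sup>2)))) (at (t, x))"
proof -
  have pos: "0 < 1 + (x - c)\<^sup>2" by (simp add: add_pos_nonneg)
  have "((\<lambda>p. C - M * sqrt (1 + (snd p - c)\<^sup>2) - K * fst p - \<eta> / (T - fst p)) has_derivative
          (\<lambda>p. fst p * (- K - \<eta> / (T - t)\<^sup>2) + snd p * (- M * (x - c) / sqrt (1 + (x - c)\<^sup>2)))) (at (t, x))"
    apply (rule has_derivative_eq_rhs)
     apply (rule derivative_intros has_derivative_fst[OF has_derivative_ident] has_derivative_snd[OF has_derivative_ident] | (simp add: add_pos_nonneg; fail))+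
    using assms pos apply (auto simp: fun_eq_iff field_simps power2_eq_square)
    done
  then show ?thesis by (simp add: case_prod_beta')
qed

lemma phicont:
  fixes y0 x :: "'n jpt"
  assumes t: "t < T" and x: "x \<in> J" and y0: "y0 \<in> J" and e: "0 < e" and M: "0 \<le> M"
  shows "\<exists>\<delta>>0. \<forall>s y. y \<in> J \<and> \<bar>s - t\<bar> < \<delta> \<and> jdist x y < \<delta> \<longrightarrow>
     \<bar>(C - M * sqrt (1 + (jdist y0 y)\<^sup>2) - K * s - \<eta> / (T - s))
       - (C - M * sqrt (1 + (jdist y0 x)\<^sup>2) - K * t - \<eta> / (T - t))\<bar> < e"
proof -
  define g where "g s = K * s + \<eta> / (T - s)" for s
  have "isCont g t" using t unfolding g_def by (auto intro!: continuous_intros)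
  then have "g \<midarrow>t\<rightarrow> g t" by (simp add: isCont_def)
  from LIM_D[OF this, of "e/2"] e obtain d1 where d1: "d1 > 0"
    "\<And>s. s \<noteq> t \<and> norm (s - t) < d1 \<Longrightarrow> norm (g s - g t) < e/2" by auto
  define d2 where "d2 = e / (2 * (M + 1))"
  have d2: "d2 > 0" using e M by (simp add: d2_def)
  have Md2: "M * d2 < e / 2"
  proof -
    have "M * d2 = (e/2) * (M / (M + 1))" by (simp add: d2_def field_simps)
    also have "\<dots> < e/2 * 1" using e M by (intro mult_strict_left_mono) auto
    finally show ?thesis by simp
  qed
  show ?thesis
  proof (intro exI[of _ "min d1 d2"] conjI allI impI)
    show "0 < min d1 d2" using d1 d2 by simp
    fix s y assume sy: "y \<in> J \<and> \<bar>s - t\<bar> < min d1 d2 \<and> jdist x y < min d1 d2"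
    have gs: "\<bar>g s - g t\<bar> < e/2"
      using d1(2)[of s] sy e by (cases "s = t") auto
    have "\<bar>jdist y0 y - jdist y0 x\<bar> \<le> jdist x y"
      using jdist_tri[OF y0 x, of y] jdist_tri[OF y0, of y x] sy x jdist_sym[of x y] by auto
    then have "\<bar>sqrt (1 + (jdist y0 y)\<^sup>2) - sqrt (1 + (jdist y0 x)\<^sup>2)\<bar> \<le> jdist x y"
      using sqrt_lip order_trans by blast
    then have "M * \<bar>sqrt (1 + (jdist y0 y)\<^sup>2) - sqrt (1 + (jdist y0 x)\<^sup>2)\<bar> \<le> M * d2"
      using sy M by (intro mult_left_mono) auto
    then have "\<bar>M * sqrt (1 + (jdist y0 y)\<^sup>2) - M * sqrt (1 + (jdist y0 x)\<^sup>2)\<bar> < e/2"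
      using Md2 M by (simp add: abs_mult right_diff_distrib[symmetric])
    then show "\<bar>(C - M * sqrt (1 + (jdist y0 y)\<^sup>2) - K * s - \<eta> / (T - s))
       - (C - M * sqrt (1 + (jdist y0 x)\<^sup>2) - K * t - \<eta> / (T - t))\<bar> < e"
      using gs unfolding g_def by linarith
  qed
qed



lemma barrier:
  fixes H :: "'n::finite \<Rightarrow> real \<Rightarrow> real" and p0 :: "'n \<Rightarrow> real"
    and u0 :: "'n jpt \<Rightarrow> real" and u :: "real \<Rightarrow> 'n jpt \<Rightarrow> real"
  assumes T: "0 < T"
    and visc: "visc_super T H (FA H p0 A) u0 u"
    and lip: "\<And>x y. x \<in> J \<Longrightarrow> y \<in> J \<Longrightarrow> u0 x - u0 y \<le> L * jdist x y" and L: "0 \<le> L"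
    and lb: "\<And>s y. 0 \<le> s \<Longrightarrow> s < T \<Longrightarrow> y \<in> J \<Longrightarrow> - B * (1 + jabs y) \<le> u s y" and B: "0 < B"
    and M: "B < M" "L \<le> M"
    and HK: "\<And>a p. \<bar>p\<bar> \<le> M \<Longrightarrow> H a p < K" "\<And>a p. \<bar>p\<bar> \<le> M \<Longrightarrow> Hminus H p0 a p < K" "A < K" "0 < K"
    and y0: "y0 \<in> J" and eta: "0 < \<eta>"
    and s: "0 \<le> s" "s < T" and y: "y \<in> J"
  shows "u0 y0 - M * sqrt (1 + (jdist y0 y)\<^sup>2) - K * s - \<eta> / (T - s) \<le> u s y"
proof -
  have M0: "0 \<le> M" using B M by simp
  define Vr where "Vr s y = real_of_ereal (lsc_env T u s y)" for s y
  have Vb: "lsc_env T u s y = ereal (Vr s y) \<and> - B * (2 + jabs y) \<le> Vr s y \<and> Vr s y \<le> u s y"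
    if "0 \<le> s" "s < T" "y \<in> J" for s y
  proof -
    have up: "lsc_env T u s y \<le> ereal (u s y)" using lsc_env_le that .
    have lo: "ereal (- B * (2 + jabs y)) \<le> lsc_env T u s y"
    proof (rule lsc_env_ge[of 1])
      fix s' y' assume "(s', y') \<in> Sb T s y 1"
      then have h: "0 \<le> s'" "s' < T" "y' \<in> J" "jdist y y' < 1" by (auto simp: Sb_def)
      have "jabs y' \<le> jabs y + 1" using jdist_abs[OF that(3) h(3)] h(4) by linarith
      then have "B * (1 + jabs y') \<le> B * (2 + jabs y)" using B by (intro mult_left_mono) auto
      then show "- B * (2 + jabs y) \<le> u s' y'" using lb[OF h(1-3)] by linarith
    qed simp
    from up lo have "lsc_env T u s y = ereal (Vr s y)" unfolding Vr_def by (cases "lsc_env T u s y") auto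
    then show ?thesis using up lo by auto
  qed
  define \<phi> where "\<phi> s y = u0 y0 - M * sqrt (1 + (jdist y0 y)\<^sup>2) - K * s - \<eta> / (T - s)" for s y
  define \<psi> where "\<psi> s y = Vr s y - \<phi> s y" for s y
  have main: "0 \<le> \<psi> s1 y1" if s1: "0 \<le> s1" "s1 < T" "y1 \<in> J" for s1 y1
  proof (rule ccontr)
    assume "\<not> 0 \<le> \<psi> s1 y1" hence neg: "\<psi> s1 y1 < 0" by simp
    define Q where "Q = M * jabs y0 + 2 * B + \<bar>u0 y0\<bar> + 1"
    have Q: "0 < Q" using B M0 jabs_nonneg[OF y0] mult_nonneg_nonneg[OF M0 jabs_nonneg[OF y0]] unfolding Q_def by linarith
    have coer: "(M - B) * jabs y + \<eta> / (T - s) - Q \<le> \<psi> s y" if "0 \<le> s" "s < T" "y \<in> J" for s y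
    proof -
      have "jabs y - jabs y0 \<le> jdist y0 y" using jdist_abs[OF y0 that(3)] by linarith
      also have "\<dots> \<le> sqrt (1 + (jdist y0 y)\<^sup>2)" using sqrt_ge[of "jdist y0 y"] by linarith
      finally have "M * (jabs y - jabs y0) \<le> M * sqrt (1 + (jdist y0 y)\<^sup>2)" using M0 by (intro mult_left_mono)
      moreover have "0 \<le> K * s" using HK(4) that by simp
      moreover have "- B * (2 + jabs y) \<le> Vr s y" using Vb[OF that] by simp
      ultimately show ?thesis unfolding \<psi>_def \<phi>_def Q_def by (auto simp: algebra_simps)
    qed
    define R where "R = Q / (M - B)"
    define T' where "T' = T - \<eta> / Q"
    have T'T: "T' < T" using eta Q by (simp add: T'_def)
    have small: "s \<le> T' \<and> jabs y \<le> R" if "0 \<le> s" "s < T" "y \<in> J" "\<psi> s y < 0" for s y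
    proof -
      have a: "0 \<le> (M - B) * jabs y" using M jabs_nonneg[OF that(3)] by simp
      have b: "0 < \<eta> / (T - s)" using eta that by simp
      have c: "(M - B) * jabs y + \<eta> / (T - s) < Q" using coer[OF that(1-3)] that(4) by linarith
      have "\<eta> / (T - s) < Q" using a c by linarith
      then have "\<eta> < Q * (T - s)" using that by (simp add: divide_less_eq)
      then have "\<eta> / Q < T - s" using Q by (simp add: divide_less_eq mult.commute)
      moreover have "(M - B) * jabs y < Q" using b c by linarith
      then have "jabs y < R" using M unfolding R_def by (simp add: less_divide_eq mult.commute)
      ultimately show ?thesis unfolding T'_def by simp
    qed
    define Rect where "Rect = {0..T'} \<times> {0..R}"
    have s1R: "(s1, jabs y1) \<in> Rect" using small[OF s1 neg] s1 jabs_nonneg[OF s1(3)] by (simp add: Rect_def)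
    have Rc: "compact Rect" "Rect \<noteq> {}" using s1R by (auto simp: Rect_def intro!: compact_Times)
    have inD: "0 \<le> fst p \<and> fst p < T \<and> 0 \<le> snd p" if "p \<in> Rect" for p
      using that T'T by (auto simp: Rect_def)
    define f where "f a p = \<psi> (fst p) (pt a (snd p))" for a p
    have lscf: "\<exists>r>0. \<forall>q\<in>Rect. dist q p < r \<longrightarrow> c < f a q" if p: "p \<in> Rect" "c < f a p" for a p c
    proof -
        obtain t z where p: "p = (t, z)" by fastforce
        have tz: "0 \<le> t" "t < T" "0 \<le> z" using inD[OF that(1)] p by auto
        define x where "x = pt a z"
        have xJ: "x \<in> J" using tz by (simp add: x_def pt_in_J)
        define e where "e = (f a p - c) / 2"
        have e: "0 < e" using that(2) by (simp add: e_def)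
        have fp: "f a p = Vr t x - \<phi> t x" by (simp add: f_def \<psi>_def p x_def)
        have "c + \<phi> t x + e < Vr t x" using fp that(2) unfolding e_def by (simp add: field_simps)
        then have "ereal (c + \<phi> t x + e) < lsc_env T u t x" using Vb[OF tz(1,2) xJ] by simp
        from lsc_env_open[OF this xJ] obtain r1 where r1: "r1 > 0"
          "\<And>s y. (s, y) \<in> Sb T t x r1 \<Longrightarrow> ereal (c + \<phi> t x + e) < lsc_env T u s y" by blast
        obtain r2 where r2: "r2 > 0" "\<forall>s y. y \<in> J \<and> \<bar>s - t\<bar> < r2 \<and> jdist x y < r2 \<longrightarrow> \<bar>\<phi> s y - \<phi> t x\<bar> < e"
          using phicont[OF tz(2) xJ y0 e M0, of "u0 y0" K \<eta>] unfolding \<phi>_def by blast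
        show ?thesis
        proof (intro exI[of _ "min r1 r2"] conjI ballI impI)
          show "0 < min r1 r2" using r1 r2 by simp
          fix q assume q: "q \<in> Rect" "dist q p < min r1 r2"
          obtain s z' where qe: "q = (s, z')" by fastforce
          have sz: "0 \<le> s" "s < T" "0 \<le> z'" using inD[OF q(1)] qe by auto
          have ds: "\<bar>s - t\<bar> < min r1 r2" using dist_fst_le[of q p] q(2) qe p by (simp add: dist_real_def)
          have dz: "\<bar>z - z'\<bar> < min r1 r2" using dist_snd_le[of q p] q(2) qe p by (simp add: dist_real_def abs_minus_commute)
          define y' where "y' = pt a z'"
          have y'J: "y' \<in> J" using sz by (simp add: y'_def pt_in_J)
          have jd: "jdist x y' = \<bar>z - z'\<bar>" using jdist_pt tz sz by (simp add: x_def y'_def)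
          have "(s, y') \<in> Sb T t x r1" using sz y'J ds dz jd by (simp add: Sb_def)
          then have "ereal (c + \<phi> t x + e) < lsc_env T u s y'" by (rule r1(2))
          then have v: "c + \<phi> t x + e < Vr s y'" using Vb[OF sz(1,2) y'J] by simp
          have w: "\<bar>\<phi> s y' - \<phi> t x\<bar> < e" using r2(2) y'J ds dz jd by auto
          have fq: "f a q = Vr s y' - \<phi> s y'" by (simp add: f_def \<psi>_def qe y'_def)
          show "c < f a q" using v w fq by (simp add: abs_less_iff)
        qed
      qed
    have "\<exists>p\<in>Rect. \<forall>q\<in>Rect. f a p \<le> f a q" for a
      by (rule lsc_attains_min[OF Rc]) (rule lscf)
    then obtain pm where pm: "\<And>a. pm a \<in> Rect \<and> (\<forall>q\<in>Rect. f a (pm a) \<le> f a q)" by metis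
    have "Min (range (\<lambda>a. f a (pm a))) \<in> range (\<lambda>a. f a (pm a))" by (intro Min_in) auto
    then obtain as where asv: "f as (pm as) = Min (range (\<lambda>a. f a (pm a)))" by (metis (no_types, lifting) rangeE)
    have as: "f as (pm as) \<le> f a (pm a)" for a unfolding asv by (intro Min_le) auto
    obtain t0 z0 where tz: "pm as = (t0, z0)" by fastforce
    define x0 where "x0 = pt as z0"
    define m where "m = \<psi> t0 x0"
    have t0z0: "0 \<le> t0" "t0 < T" "0 \<le> z0" using inD[of "pm as"] pm[of as] tz by auto
    have x0J: "x0 \<in> J" using t0z0 by (simp add: x0_def pt_in_J)
    have gmin_neg: "m \<le> \<psi> s y" if yd: "0 \<le> s" "s < T" "y \<in> J" "\<psi> s y < 0" for s y
    proof -
      obtain b where yb: "y = pt b (jabs y)" using J_pt[OF yd(3)] by auto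
      have "(s, jabs y) \<in> Rect" using small[OF yd] yd jabs_nonneg[OF yd(3)] by (simp add: Rect_def)
      then have "f b (pm b) \<le> f b (s, jabs y)" using pm by blast
      moreover have "f as (pm as) \<le> f b (pm b)" by (rule as)
      ultimately show ?thesis using yb by (simp add: f_def m_def tz x0_def)
    qed
    have mneg: "m < 0" using gmin_neg[OF s1 neg] neg by simp
    have gmin: "m \<le> \<psi> s y" if "0 \<le> s" "s < T" "y \<in> J" for s y
      using gmin_neg[OF that] mneg by (cases "\<psi> s y < 0") auto
    have psi0: "0 < \<psi> 0 y" if "y \<in> J" for y
    proof -
      have "ereal (u0 y) \<le> lsc_env T u 0 y" using visc that unfolding visc_super_def by blast
      then have a: "u0 y \<le> Vr 0 y" using Vb[of 0 y] T that by simp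
      have b: "u0 y0 - u0 y \<le> L * jdist y0 y" using lip[OF y0 that] .
      have "L * jdist y0 y \<le> M * sqrt (1 + (jdist y0 y)\<^sup>2)"
        using M L sqrt_ge[of "jdist y0 y"] jdist_nonneg[OF y0 that] by (intro mult_mono) auto
      moreover have "0 < \<eta> / T" using eta T by simp
      ultimately show ?thesis using a b unfolding \<psi>_def \<phi>_def by simp
    qed
    have t0pos: "0 < t0"
    proof (rule ccontr)
      assume "\<not> 0 < t0" then have "t0 = 0" using t0z0 by simp
      then show False using psi0[OF x0J] mneg by (simp add: m_def)
    qed
    define c where "c a = (if jbranch y0 = Some a then jabs y0 else - jabs y0)" for a
    have ddpt: "jdist y0 (pt a z) = \<bar>z - c a\<bar>" if "0 \<le> z" for a z
    proof (cases y0)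
      case Jo
      then show ?thesis using that by (simp add: c_def jdist_def pt_def)
    next
      case (Br b r)
      then have r: "0 < r" using y0 by (simp add: J_def)
      show ?thesis
      proof (cases "z = 0")
        case True
        then show ?thesis using Br r by (simp add: c_def jdist_def pt_def)
      next
        case False
        then show ?thesis using Br r that by (cases "a = b") (auto simp: c_def jdist_def pt_def)
      qed
    qed
    define phi where "phi s y = \<phi> s y + m" for s y
    define phit where "phit a t x = - K - \<eta> / (T - t)\<^sup>2" for a :: 'n and t x :: real
    define phix where "phix a t x = - M * (x - c a) / sqrt (1 + (x - c a)\<^sup>2)" for a :: 'n and t x :: real
    have phix_bd: "\<bar>phix a t x\<bar> \<le> M" for a t x
    proof -
      have sq: "0 < sqrt (1 + (x - c a)\<^sup>2)" by (simp add: add_pos_nonneg)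
      have "\<bar>phix a t x\<bar> = M * (\<bar>x - c a\<bar> / sqrt (1 + (x - c a)\<^sup>2))"
        using M0 by (simp add: phix_def abs_mult abs_divide)
      also have "\<dots> \<le> M * 1" using M0 sqrt_ge[of "x - c a"] sq
        by (intro mult_left_mono) (auto simp: divide_le_eq_1)
      finally show ?thesis by simp
    qed
    have phit_neg: "phit a t0 x < - K" for a x
      using t0z0 eta by (simp add: phit_def)
    have conc: "case x0 of Jo \<Rightarrow> (\<forall>a. phit a t0 0 + FA H p0 A (\<chi> b. phix b t0 0) \<ge> 0)
                  | Br a x \<Rightarrow> phit a t0 x + H a (phix a t0 x) \<ge> 0"
    proof -
      note V1 = conjunct1[OF visc[unfolded visc_super_def], THEN spec[of _ phi], THEN spec[of _ phit], THEN spec[of _ phix], THEN spec[of _ t0], THEN spec[of _ x0], THEN mp]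
      have jc: "jcont T phi"
      proof (unfold jcont_def, intro allI impI)
        fix t e :: real and x :: "'n jpt" assume h: "0 < t \<and> t < T \<and> x \<in> J \<and> 0 < e"
        obtain d where d: "d > 0" "\<forall>s y. y \<in> J \<and> \<bar>s - t\<bar> < d \<and> jdist x y < d \<longrightarrow> \<bar>\<phi> s y - \<phi> t x\<bar> < e"
          using phicont[of t T x y0 e M "u0 y0" K \<eta>] h y0 M0 unfolding \<phi>_def by blast
        then show "\<exists>\<delta>>0. \<forall>s y. 0 < s \<and> s < T \<and> y \<in> J \<and> \<bar>s - t\<bar> < \<delta> \<and> jdist x y < \<delta> \<longrightarrow>
            \<bar>phi s y - phi t x\<bar> < e"
          by (auto simp: phi_def)
      qed
      have nz: "\<And>z::real. 1 + z\<^sup>2 \<noteq> 0" by (smt (verit) zero_le_power2)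
      have c1: "c1_branch T phi a (phit a) (phix a)" for a
      proof (unfold c1_branch_def, intro conjI allI impI)
        show "continuous_on ({0<..<T} \<times> {0..}) (\<lambda>(t, x). phit a t x)"
          unfolding phit_def case_prod_beta' by (auto intro!: continuous_intros)
        show "continuous_on ({0<..<T} \<times> {0..}) (\<lambda>(t, x). phix a t x)"
          using nz unfolding phix_def case_prod_beta' by (auto intro!: continuous_intros)
        fix t x :: real assume tx: "0 < t \<and> t < T \<and> 0 \<le> x"
        have d: "((\<lambda>(s, y). (u0 y0 + m) - M * sqrt (1 + (y - c a)\<^sup>2) - K * s - \<eta> / (T - s)) has_derivative
          (\<lambda>(h, k). h * (- K - \<eta> / (T - t)\<^sup>2) + k * (- M * (x - c a) / sqrt (1 + (x - c a)\<^sup>2)))) (at (t, x) within {0<..<T} \<times> {0..})"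
          by (rule has_derivative_at_withinI, rule deriv_branch) (use tx in simp)
        show "((\<lambda>(s, y). phi s (pt a y)) has_derivative (\<lambda>(h, k). h * phit a t x + k * phix a t x))
          (at (t, x) within {0<..<T} \<times> {0..})"
          unfolding phit_def phix_def
        proof (rule has_derivative_transform_within[OF d, of 1])
          show "(t, x) \<in> {0<..<T} \<times> {0..}" using tx by auto
          fix q :: "real \<times> real" assume "q \<in> {0<..<T} \<times> {0..}"
          then obtain s' y' where qe: "q = (s', y')" "0 \<le> y'" by auto
          show "(\<lambda>(s, y). u0 y0 + m - M * sqrt (1 + (y - c a)\<^sup>2) - K * s - \<eta> / (T - s)) q = (\<lambda>(s, y). phi s (pt a y)) q"
            using ddpt[OF qe(2), of a] by (simp add: qe phi_def \<phi>_def)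
        qed simp
      qed
      have ex: "\<exists>r>0. \<forall>s y. 0 < s \<and> s < T \<and> y \<in> J \<and> \<bar>s - t0\<bar> < r \<and> jdist y x0 < r \<longrightarrow>
               ereal (phi s y) \<le> lsc_env T u s y"
      proof (intro exI[of _ 1] conjI allI impI)
        fix s y assume h: "0 < s \<and> s < T \<and> y \<in> J \<and> \<bar>s - t0\<bar> < 1 \<and> jdist y x0 < 1"
        then have "m \<le> \<psi> s y" using gmin by auto
        then show "ereal (phi s y) \<le> lsc_env T u s y" using Vb[of s y] h by (simp add: phi_def \<psi>_def)
      qed simp
      have eq: "lsc_env T u t0 x0 = ereal (phi t0 x0)"
        using Vb[OF t0z0(1,2) x0J] by (simp add: phi_def m_def \<psi>_def)
      show ?thesis
        apply (rule V1)
        using t0pos t0z0(2) x0J jc c1 ex eq by (intro conjI allI) assumption+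
    qed
    show False
    proof (cases "z0 = 0")
      case True
      then have "x0 = Jo" by (simp add: x0_def pt_def)
      with conc have h: "phit as t0 0 + FA H p0 A (\<chi> b. phix b t0 0) \<ge> 0" by simp
      have "Max (range (\<lambda>a. Hminus H p0 a ((\<chi> b. phix b t0 0) $ a))) < K"
        using HK(2) phix_bd by (subst Max_less_iff) auto
      then have "FA H p0 A (\<chi> b. phix b t0 0) < K" using HK(3) by (simp add: FA_def)
      then show False using h phit_neg[of as 0] by linarith
    next
      case False
      then have "x0 = Br as z0" by (simp add: x0_def pt_def)
      with conc have h: "phit as t0 z0 + H as (phix as t0 z0) \<ge> 0" by simp
      then show False using HK(1)[OF phix_bd] phit_neg[of as z0] by (smt (verit))
    qed
  qed
  then show ?thesis using Vb[OF s y] main[OF s y] unfolding \<psi>_def \<phi>_def by linarith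
qed



theorem lemma6p1:
  fixes T A :: real
    and H :: "'n::finite \<Rightarrow> real \<Rightarrow> real"
    and p0 :: "'n \<Rightarrow> real"
    and u0 :: "'n jpt \<Rightarrow> real"
    and u :: "real \<Rightarrow> 'n jpt \<Rightarrow> real"
  assumes "0 < T"
    and "hyp_H H p0"
    and "jlipschitz u0"
    and "visc_super T H (FA H p0 A) u0 u"
    and "\<exists>CT>0. \<forall>t x. 0 < t \<and> t < T \<and> x \<in> J \<longrightarrow> u t x \<ge> - CT * (1 + jdist Jo x)"
  shows "\<exists>C>0. \<forall>dt dx U. 0 < dt \<and> 0 < dx \<and> CFLr H p0 A u0 dt dx \<and> scheme H p0 A u0 dt dx U \<longrightarrow>
           (\<forall>n a i s y. real n * dt \<le> T \<and> 0 \<le> s \<and> s < T \<and> y \<in> J \<longrightarrow>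
              U n a i \<le> u s y + C * (1 + jdist (pt a (real i * dx)) y))"
proof -
  note T = assms(1) and visc = assms(4)
  obtain LH where LH: "\<And>a p q. \<bar>H a p - H a q\<bar> \<le> LH a * \<bar>p - q\<bar>"
    using assms(2) unfolding hyp_H_def by metis
  have pmin: "\<And>a p. H a (p0 a) \<le> H a p" using assms(2) unfolding hyp_H_def by blast
  obtain L0 where L0: "\<forall>x\<in>J. \<forall>y\<in>J. \<bar>u0 x - u0 y\<bar> \<le> L0 * jdist x y"
    using assms(3) unfolding jlipschitz_def by blast
  define L where "L = \<bar>L0\<bar>"
  have L: "0 \<le> L" by (simp add: L_def)
  have lip: "u0 x - u0 y \<le> L * jdist x y" if "x \<in> J" "y \<in> J" for x y
  proof -
    have "L0 * jdist x y \<le> L * jdist x y"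
      using jdist_nonneg[OF that] by (intro mult_right_mono) (auto simp: L_def)
    then show ?thesis using L0 that by force
  qed
  obtain CT where CT: "CT > 0" "\<And>t x. 0 < t \<Longrightarrow> t < T \<Longrightarrow> x \<in> J \<Longrightarrow> u t x \<ge> - CT * (1 + jdist Jo x)"
    using assms(5) by blast
  define B where "B = max CT (max L \<bar>u0 Jo\<bar>) + 1"
  have B: "0 < B" "CT \<le> B" "L \<le> B" "\<bar>u0 Jo\<bar> \<le> B" using CT L by (auto simp: B_def)
  have jJo: "jdist Jo y = jabs y" if "y \<in> J" for y :: "'n jpt"
    using jabs_nonneg[OF that] by (simp add: jdist_def)
  have lb: "- B * (1 + jabs y) \<le> u s y" if "0 \<le> s" "s < T" "y \<in> J" for s y
  proof (cases "s = 0")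
    case False
    then have "- CT * (1 + jabs y) \<le> u s y" using CT(2)[of s y] that jJo by auto
    moreover have "CT * (1 + jabs y) \<le> B * (1 + jabs y)"
      using B jabs_nonneg[OF that(3)] by (intro mult_right_mono) auto
    ultimately show ?thesis by linarith
  next
    case True
    have "ereal (u0 y) \<le> lsc_env T u 0 y" using visc that unfolding visc_super_def by blast
    also have "\<dots> \<le> ereal (u 0 y)" using lsc_env_le[of 0 T y u] T that by simp
    finally have a: "u0 y \<le> u 0 y" by simp
    have b: "u0 Jo - u0 y \<le> L * jabs y" using lip[of Jo y] that jJo by (simp add: J_def)
    have c: "L * jabs y \<le> B * jabs y" using B jabs_nonneg[OF that(3)] by (intro mult_right_mono) auto
    show ?thesis using a b c B True by (simp add: algebra_simps)
  qed
  define M where "M = B + L + 1"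
  have M: "B < M" "L \<le> M" "0 \<le> M" using L B by (auto simp: M_def)
  define KH where "KH = (\<Sum>a\<in>UNIV. \<bar>H a 0\<bar> + \<bar>LH a\<bar> * M)"
  define K where "K = 1 + \<bar>A\<bar> + KH"
  have KH0: "0 \<le> KH" unfolding KH_def using M by (intro sum_nonneg) auto
  have HK1: "H a p < K" if "\<bar>p\<bar> \<le> M" for a p
  proof -
    have "H a p \<le> H a 0 + LH a * \<bar>p\<bar>" using LH[of a p 0] by simp
    also have "\<dots> \<le> \<bar>H a 0\<bar> + \<bar>LH a\<bar> * M"
    proof -
      have "LH a * \<bar>p\<bar> \<le> \<bar>LH a\<bar> * \<bar>p\<bar>" by (intro mult_right_mono) auto
      also have "\<dots> \<le> \<bar>LH a\<bar> * M" using that by (intro mult_left_mono) auto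
      finally show ?thesis by linarith
    qed
    also have "\<dots> \<le> KH" unfolding KH_def using M
      by (intro member_le_sum[where f="\<lambda>a. \<bar>H a 0\<bar> + \<bar>LH a\<bar> * M"]) auto
    finally show ?thesis by (simp add: K_def)
  qed
  have HK2: "Hminus H p0 a p < K" if "\<bar>p\<bar> \<le> M" for a p
  proof -
    have "Hminus H p0 a p \<le> H a p"
      unfolding Hminus_def using pmin[of a p] by (cases "p \<le> p0 a") (auto simp: min_def)
    then show ?thesis using HK1[OF that, of a] by simp
  qed
  have HK3: "A < K" "0 < K" using KH0 by (auto simp: K_def)
  have ulow: "u0 y - M - K * s \<le> u s y" if s: "0 \<le> s" "s < T" and y: "y \<in> J" for s y
  proof (rule ccontr)
    assume "\<not> ?thesis"
    then have d: "0 < u0 y - M - K * s - u s y" by simp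
    define \<eta> where "\<eta> = (u0 y - M - K * s - u s y) * (T - s) / 2"
    have eta: "0 < \<eta>" using d s by (simp add: \<eta>_def)
    have "u0 y - M * sqrt (1 + (jdist y y)\<^sup>2) - K * s - \<eta> / (T - s) \<le> u s y"
      by (rule barrier[OF T visc lip L lb B(1) M(1,2) HK1 HK2 HK3 y eta s y])
    moreover have "\<eta> / (T - s) = (u0 y - M - K * s - u s y) / 2" using s by (simp add: \<eta>_def field_simps)
    ultimately show False using d by (simp add: jdist_self field_simps)
  qed
  define K1 where "K1 = \<bar>A\<bar> + (\<Sum>a\<in>UNIV. \<bar>H a (p0 a)\<bar>)"
  have K1: "0 \<le> K1" by (simp add: K1_def sum_nonneg)
  define C where "C = M + K * T + T * K1 + L + 1"
  show ?thesis
  proof (intro exI[of _ C] conjI allI impI)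
    have KT: "0 \<le> K * T" "0 \<le> T * K1" using HK3 T K1 by auto
    then show "0 < C" using M L unfolding C_def by linarith
    fix dt dx :: real and U :: "nat \<Rightarrow> 'n \<Rightarrow> nat \<Rightarrow> real" and n :: nat and a :: 'n and i :: nat and s :: real and y :: "'n jpt"
    assume h1: "0 < dt \<and> 0 < dx \<and> CFLr H p0 A u0 dt dx \<and> scheme H p0 A u0 dt dx U"
    assume h2: "real n * dt \<le> T \<and> 0 \<le> s \<and> s < T \<and> y \<in> J"
    have dt: "0 < dt" and dx: "0 < dx" and sch: "scheme H p0 A u0 dt dx U" using h1 by auto
    have step: "U (Suc k) b j \<le> U k b j + dt * K1" for k b j
    proof -
      have "(U (Suc k) b j - U k b j) / dt \<le> K1"
      proof (cases "j = 0")
        case True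
        have "(U (Suc k) b 0 - U k b 0) / dt = - FA H p0 A (\<chi> c. (U k c 1 - U k c 0) / dx)"
          using sch unfolding scheme_def by (simp add: eq_neg_iff_add_eq_0)
        moreover have "A \<le> FA H p0 A (\<chi> c. (U k c 1 - U k c 0) / dx)" by (simp add: FA_def)
        moreover have "0 \<le> (\<Sum>a\<in>UNIV. \<bar>H a (p0 a)\<bar>)" by (simp add: sum_nonneg)
        moreover have "- A \<le> \<bar>A\<bar>" by simp
        ultimately show ?thesis unfolding True K1_def by linarith
      next
        case False
        then have "(U (Suc k) b j - U k b j) / dt = - max (Hplus H p0 b ((U k b j - U k b (j - 1)) / dx))
              (Hminus H p0 b ((U k b (j + 1) - U k b j) / dx))"
          using sch unfolding scheme_def by (simp add: eq_neg_iff_add_eq_0)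
        moreover have "H b (p0 b) \<le> Hplus H p0 b ((U k b j - U k b (j - 1)) / dx)"
          unfolding Hplus_def by (rule pmin)
        moreover have "- H b (p0 b) \<le> (\<Sum>a\<in>UNIV. \<bar>H a (p0 a)\<bar>)"
          using member_le_sum[of b UNIV "\<lambda>a. \<bar>H a (p0 a)\<bar>"] by auto
        ultimately show ?thesis by (simp add: K1_def)
      qed
      then show ?thesis using dt by (simp add: pos_divide_le_eq algebra_simps)
    qed
    have ind: "U k b j \<le> U 0 b j + real k * dt * K1" for k b j
    proof (induction k)
      case 0 then show ?case by simp
    next
      case (Suc k) then show ?case using step[of k b j] by (simp add: algebra_simps)
    qed
    define x where "x = pt a (real i * dx)"
    have xJ: "x \<in> J" using dx by (simp add: x_def pt_in_J)
    have U0: "U 0 a i = u0 x" using sch unfolding scheme_def x_def by blast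
    have "real n * dt * K1 \<le> T * K1" using h2 K1 by (intro mult_right_mono) auto
    then have a: "U n a i \<le> u0 x + T * K1" using ind[of n a i] U0 by simp
    have b: "u0 x - u0 y \<le> L * jdist x y" using lip xJ h2 by blast
    have c: "u0 y - M - K * s \<le> u s y" using ulow h2 by blast
    have d: "K * s \<le> K * T" using HK3 h2 by (intro mult_left_mono) auto
    have jd: "0 \<le> jdist x y" using jdist_nonneg xJ h2 by blast
    have e: "L * jdist x y \<le> C * jdist x y" using jd KT M by (intro mult_right_mono) (auto simp: C_def)
    have "M + K * T + T * K1 \<le> C" by (simp add: C_def L)
    then show "U n a i \<le> u s y + C * (1 + jdist (pt a (real i * dx)) y)"
      using a b c d e unfolding x_def[symmetric] by (simp add: algebra_simps)
  qed
qed


end
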